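(* Every asymptotically uniformly smooth Banach space $X$ has the alternating Banach-Saks property. In particular, if $X$ is also reflexive, then $X$ has the Banach-Saks property.
   Context: The modulus of asymptotic uniform smoothness of $X$ is $\overline{\rho}_X(t)=\sup_{x\in\partial B_X}\inf_{\dim(X/E)<\infty}\sup_{h\in\partial B_E}\|x+th\|-1$ ($E$ closed finite-codimensional subspaces, $\partial B$ the unit sphere); $X$ is asymptotically uniformly smooth if $\lim_{t\to0^+}\overline\rho_X(t)/t=0$. $X$ has the Banach-Saks property if every bounded sequence $(x_n)$ has a subsequence $(x_{n_j})$ with $(\frac1k\sum_{j=1}^kx_{n_j})_k$ norm convergent; it has the alternating Banach-Saks property if every bounded sequence has a subsequence $(x_{n_j})$ and signs $\varepsilon_j\in\{-1,1\}$ with $(\frac1k\sum_{j=1}^k\varepsilon_jx_{n_j})_k$ norm convergent. *)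

theory Defs
  imports "HOL-Analysis.Analysis"
begin

definition fincodim_subspaces :: "'a::real_normed_vector set set" where
  "fincodim_subspaces =
     {E. subspace E \<and> closed E \<and> (\<exists>F. finite F \<and> span (E \<union> F) = UNIV)}"

text \<open>Modulus of asymptotic uniform smoothness, valued in the extended reals
  (so that suprema/infima are always defined).\<close>
definition aus_modulus :: "'a::real_normed_vector itself \<Rightarrow> real \<Rightarrow> ereal" where
  "aus_modulus _ t =
     (SUP x\<in>sphere (0::'a) 1. INF E\<in>(fincodim_subspaces :: 'a set set).
        SUP h\<in>sphere 0 1 \<inter> E. ereal (norm (x + t *\<^sub>R h) - 1))"

definition asymptotically_uniformly_smooth :: "'a::real_normed_vector itself \<Rightarrow> bool" where
  "asymptotically_uniformly_smooth X \<longleftrightarrow>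
     ((\<lambda>t. aus_modulus X t / ereal t) \<longlongrightarrow> 0) (at_right 0)"

definition banach_saks :: "'a::real_normed_vector itself \<Rightarrow> bool" where
  "banach_saks _ \<longleftrightarrow>
     (\<forall>x :: nat \<Rightarrow> 'a. bounded (range x) \<longrightarrow>
        (\<exists>r. strict_mono r \<and>
           convergent (\<lambda>k. (1 / real (Suc k)) *\<^sub>R (\<Sum>j\<le>k. x (r j)))))"

definition alternating_banach_saks :: "'a::real_normed_vector itself \<Rightarrow> bool" where
  "alternating_banach_saks _ \<longleftrightarrow>
     (\<forall>x :: nat \<Rightarrow> 'a. bounded (range x) \<longrightarrow>
        (\<exists>r \<epsilon>. strict_mono r \<and> (\<forall>j. \<epsilon> j \<in> {-1, 1::real}) \<and>
           convergent (\<lambda>k. (1 / real (Suc k)) *\<^sub>R (\<Sum>j\<le>k. \<epsilon> j *\<^sub>R x (r j)))))"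

definition reflexive_space :: "'a::real_normed_vector itself \<Rightarrow> bool" where
  "reflexive_space _ \<longleftrightarrow>
     (\<forall>\<phi> :: ('a \<Rightarrow>\<^sub>L real) \<Rightarrow>\<^sub>L real. \<exists>x::'a. \<forall>f. blinfun_apply \<phi> f = blinfun_apply f x)"

end

theory Submission
  imports Defs
begin

lemma ex_ultra_seq:
  "\<exists>U::nat filter. U \<noteq> bot \<and> U \<le> sequentially \<and> (\<forall>P. eventually P U \<or> eventually (\<lambda>x. \<not> P x) U)"
proof -
  let ?R = "{(b, a). a \<noteq> bot \<and> a \<le> b \<and> b \<le> (sequentially::nat filter)}"
  have bot_notin_R: "c \<in> Chains ?R \<Longrightarrow> bot \<notin> c" for c
    by (auto simp: Chains_def)
  have FR[simp]: "Field ?R = {G. G \<noteq> bot \<and> G \<le> sequentially}"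
    by (auto simp: Field_def bot_unique)
  have "\<exists>m\<in>Field ?R. \<forall>a\<in>Field ?R. (m, a) \<in> ?R \<longrightarrow> a = m"
  proof (rule Zorns_po_lemma)
    show "Partial_order ?R"
      by (auto simp: partial_order_on_def preorder_on_def
          antisym_def refl_on_def trans_def Field_def bot_unique)
    show "\<exists>u\<in>Field ?R. \<forall>a\<in>C. (a, u) \<in> ?R" if C: "C \<in> Chains ?R" for C
    proof (simp, intro exI conjI ballI)
      have Inf_C: "Inf C \<noteq> bot" "Inf C \<le> sequentially" if "C \<noteq> {}"
      proof -
        from C that have "Inf C = bot \<longleftrightarrow> (\<exists>x\<in>C. x = bot)"
          unfolding trivial_limit_def by (intro eventually_Inf_base) (auto simp: Chains_def)
        with C show "Inf C \<noteq> bot"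
          by (simp add: bot_notin_R)
        from that obtain x where "x \<in> C" by auto
        with C show "Inf C \<le> sequentially"
          by (auto intro!: Inf_lower2[of x] simp: Chains_def)
      qed
      then have [simp]: "inf sequentially (Inf C) = (if C = {} then sequentially else Inf C)"
        using C by (auto simp add: inf_absorb2)
      from C show "inf sequentially (Inf C) \<noteq> bot"
        by (simp add: Inf_C)
      from C show "inf sequentially (Inf C) \<le> sequentially"
        by (simp add: Chains_def Inf_C)
      with C show "inf sequentially (Inf C) \<le> x" "x \<le> sequentially" if "x \<in> C" for x
        using that  by (auto intro: Inf_lower simp: Chains_def)
    qed
  qed
  then obtain U where U: "U \<noteq> bot" "U \<le> sequentially"
    and max: "\<And>G. G \<noteq> bot \<Longrightarrow> G \<le> U \<Longrightarrow> G = U"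
    by auto
  have "eventually P U \<or> eventually (\<lambda>x. \<not> P x) U" for P
  proof (rule disjCI)
    assume "\<not> eventually (\<lambda>x. \<not> P x) U"
    then have "inf U (principal {x. P x}) \<noteq> bot"
      by (simp add: trivial_limit_def eventually_inf_principal not_eventually)
    then have "inf U (principal {x. P x}) = U"
      by (rule max) simp
    moreover have "eventually P (inf U (principal {x. P x}))"
      by (simp add: eventually_inf_principal)
    ultimately show "eventually P U" by simp
  qed
  with U show ?thesis by blast
qed

lemma ultra_lim:
  fixes U :: "nat filter" and f :: "nat \<Rightarrow> real"
  assumes U: "U \<noteq> bot" "\<forall>P. eventually P U \<or> eventually (\<lambda>x. \<not> P x) U"
    and b: "\<And>n. \<bar>f n\<bar> \<le> C"
  shows "\<exists>l. (f \<longlongrightarrow> l) U"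
proof -
  let ?F = "filtermap f U"
  have "?F \<noteq> bot" using U by (simp add: filtermap_bot_iff)
  moreover have "eventually (\<lambda>y. y \<in> {-C..C}) ?F"
  proof -
    have "f n \<in> {-C..C}" for n using b[of n] unfolding abs_le_iff by auto
    then show ?thesis by (simp add: eventually_filtermap)
  qed
  ultimately obtain l where "inf (nhds l) ?F \<noteq> bot"
    using compact_Icc[of "-C" C, unfolded compact_filter, rule_format, of ?F] by auto
  have "(f \<longlongrightarrow> l) U"
    unfolding tendsto_def
  proof (intro allI impI)
    fix S :: "real set" assume S: "open S" "l \<in> S"
    show "eventually (\<lambda>x. f x \<in> S) U"
    proof (rule ccontr)
      assume "\<not> eventually (\<lambda>x. f x \<in> S) U"
      then have "eventually (\<lambda>x. f x \<notin> S) U" using U(2)[rule_format, of "\<lambda>x. f x \<in> S"] by simp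
      then have "eventually (\<lambda>y. y \<notin> S) ?F" by (simp add: eventually_filtermap)
      moreover have "eventually (\<lambda>y. y \<in> S) (nhds l)" using S by (rule eventually_nhds_in_open)
      ultimately have "eventually (\<lambda>y. False) (inf (nhds l) ?F)"
        unfolding eventually_inf by (intro exI[of _ "\<lambda>y. y \<in> S"] exI[of _ "\<lambda>y. y \<notin> S"]) auto
      with \<open>inf (nhds l) ?F \<noteq> bot\<close> show False by (simp add: trivial_limit_def)
    qed
  qed
  then show ?thesis ..
qed

definition projL :: "(('a::real_normed_vector \<Rightarrow>\<^sub>L real) \<times> 'a) list \<Rightarrow> 'a \<Rightarrow> 'a" where
  "projL L y = (\<Sum>p\<leftarrow>L. blinfun_apply (fst p) y *\<^sub>R snd p)"

lemma projL_Nil[simp]: "projL [] y = 0" by (simp add: projL_def)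
lemma projL_Cons[simp]: "projL (p # L) y = blinfun_apply (fst p) y *\<^sub>R snd p + projL L y"
  by (simp add: projL_def)

lemma projL_add: "projL L (a + b) = projL L a + projL L b"
  by (induction L) (auto simp: blinfun.add_right scaleR_add_left algebra_simps)

lemma projL_scale: "projL L (r *\<^sub>R a) = r *\<^sub>R projL L a"
  by (induction L) (auto simp: blinfun.scaleR_right scaleR_add_right)

lemma projL_diff: "projL L (a - b) = projL L a - projL L b"
  by (induction L) (auto simp: blinfun.diff_right scaleR_diff_left algebra_simps)

lemma projL_norm: "norm (projL L y) \<le> (\<Sum>p\<leftarrow>L. \<bar>blinfun_apply (fst p) y\<bar> * norm (snd p))"
proof (induction L)
  case (Cons p L)
  have "norm (projL (p # L) y) \<le> norm (blinfun_apply (fst p) y *\<^sub>R snd p) + norm (projL L y)"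
    unfolding projL_Cons by (rule norm_triangle_ineq)
  also have "\<dots> = \<bar>blinfun_apply (fst p) y\<bar> * norm (snd p) + norm (projL L y)" by simp
  finally show ?case using Cons by simp
qed simp

lemma projL_small:
  assumes "\<forall>p\<in>set L. \<bar>blinfun_apply (fst p) y\<bar> \<le> \<eta>"
  shows "norm (projL L y) \<le> \<eta> * (\<Sum>p\<leftarrow>L. norm (snd p))"
proof -
  have "(\<Sum>p\<leftarrow>L. \<bar>blinfun_apply (fst p) y\<bar> * norm (snd p)) \<le> \<eta> * (\<Sum>p\<leftarrow>L. norm (snd p))"
    using assms
  proof (induction L)
    case (Cons p L)
    then have "\<bar>blinfun_apply (fst p) y\<bar> * norm (snd p) \<le> \<eta> * norm (snd p)"
      by (simp add: mult_right_mono)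
    with Cons show ?case by (simp add: distrib_left)
  qed simp
  with projL_norm[of L y] show ?thesis by linarith
qed

lemma projL_bound: "norm (projL L y) \<le> (\<Sum>p\<leftarrow>L. norm (fst p) * norm (snd p)) * norm y"
proof -
  have "(\<Sum>p\<leftarrow>L. \<bar>blinfun_apply (fst p) y\<bar> * norm (snd p)) \<le> (\<Sum>p\<leftarrow>L. norm (fst p) * norm (snd p)) * norm y"
  proof (induction L)
    case (Cons p L)
    have "\<bar>blinfun_apply (fst p) y\<bar> \<le> norm (fst p) * norm y"
      using norm_blinfun[of "fst p" y] by simp
    then have "\<bar>blinfun_apply (fst p) y\<bar> * norm (snd p) \<le> norm (fst p) * norm y * norm (snd p)"
      by (simp add: mult_right_mono)
    with Cons show ?case by (simp add: algebra_simps)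
  qed simp
  with projL_norm[of L y] show ?thesis by linarith
qed

lemma coef_bound:
  fixes E :: "'a::real_normed_vector set"
  assumes "subspace E" "v \<notin> E" "e \<in> E"
  shows "\<bar>c\<bar> * infdist v E \<le> norm (e + c *\<^sub>R v)"
proof (cases "c = 0")
  case True then show ?thesis by simp
next
  case False
  have "- (1/c) *\<^sub>R e \<in> E" using assms by (simp add: subspace_scale subspace_neg)
  then have "infdist v E \<le> dist v (- (1/c) *\<^sub>R e)" by (rule infdist_le)
  also have "\<dots> = norm (v + (1/c) *\<^sub>R e)" by (simp add: dist_norm)
  finally have "\<bar>c\<bar> * infdist v E \<le> \<bar>c\<bar> * norm (v + (1/c) *\<^sub>R e)"
    by (simp add: mult_left_mono)
  also have "\<dots> = norm (c *\<^sub>R (v + (1/c) *\<^sub>R e))" by simp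
  also have "c *\<^sub>R (v + (1/c) *\<^sub>R e) = e + c *\<^sub>R v" using False by (simp add: algebra_simps)
  finally show ?thesis .
qed

lemma coef_unique:
  fixes E :: "'a::real_normed_vector set"
  assumes "subspace E" "v \<notin> E" "z - c *\<^sub>R v \<in> E" "z - c' *\<^sub>R v \<in> E"
  shows "c = c'"
proof (rule ccontr)
  assume ne: "c \<noteq> c'"
  have "(z - c *\<^sub>R v) - (z - c' *\<^sub>R v) \<in> E" by (rule subspace_diff[OF assms(1) assms(3) assms(4)])
  moreover have "(z - c *\<^sub>R v) - (z - c' *\<^sub>R v) = (c' - c) *\<^sub>R v" by (simp add: algebra_simps)
  ultimately have "(c' - c) *\<^sub>R v \<in> E" by simp
  then have "(1/(c'-c)) *\<^sub>R ((c' - c) *\<^sub>R v) \<in> E" by (rule subspace_scale[OF assms(1)])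
  then have "v \<in> E" using ne by simp
  with assms show False by simp
qed

lemma E1_subspace:
  fixes E :: "'a::real_normed_vector set"
  assumes "subspace E"
  shows "subspace {z. \<exists>c. z - c *\<^sub>R v \<in> E}"
  unfolding subspace_def
proof (intro conjI allI ballI impI)
  show "0 \<in> {z. \<exists>c. z - c *\<^sub>R v \<in> E}" using assms by (auto intro!: exI[of _ 0] simp: subspace_0)
next
  fix x y assume "x \<in> {z. \<exists>c. z - c *\<^sub>R v \<in> E}" "y \<in> {z. \<exists>c. z - c *\<^sub>R v \<in> E}"
  then obtain a b where "x - a *\<^sub>R v \<in> E" "y - b *\<^sub>R v \<in> E" by auto
  then have "(x - a *\<^sub>R v) + (y - b *\<^sub>R v) \<in> E" using assms by (simp add: subspace_add)
  then have "(x + y) - (a + b) *\<^sub>R v \<in> E" by (simp add: algebra_simps)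
  then show "x + y \<in> {z. \<exists>c. z - c *\<^sub>R v \<in> E}" by blast
next
  fix r x assume "x \<in> {z. \<exists>c. z - c *\<^sub>R v \<in> E}"
  then obtain a where "x - a *\<^sub>R v \<in> E" by auto
  then have "r *\<^sub>R (x - a *\<^sub>R v) \<in> E" using assms by (simp add: subspace_scale)
  then have "r *\<^sub>R x - (r * a) *\<^sub>R v \<in> E" by (simp add: algebra_simps)
  then show "r *\<^sub>R x \<in> {z. \<exists>c. z - c *\<^sub>R v \<in> E}" by blast
qed

lemma E1_closed:
  fixes E :: "'a::real_normed_vector set"
  assumes E: "subspace E" "closed E" and v: "v \<notin> E"
  shows "closed {z. \<exists>c. z - c *\<^sub>R v \<in> E}"
  unfolding closed_sequential_limits
proof (intro allI impI, elim conjE)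
  fix z l assume zin: "\<forall>n. z n \<in> {z. \<exists>c. z - c *\<^sub>R v \<in> E}" and lim: "z \<longlonglongrightarrow> l"
  have "E \<noteq> {}" using E by (auto simp: subspace_def)
  then have d: "infdist v E > 0" using E v by (simp add: infdist_pos_not_in_closed)
  define d where "d = infdist v E"
  from zin have "\<forall>n. \<exists>c. z n - c *\<^sub>R v \<in> E" by simp
  from choice[OF this] obtain c where c: "\<And>n. z n - c n *\<^sub>R v \<in> E" by blast
  have cb: "\<bar>c m - c n\<bar> * d \<le> dist (z m) (z n)" for m n
  proof -
    have "(z m - c m *\<^sub>R v) - (z n - c n *\<^sub>R v) \<in> E" by (rule subspace_diff[OF E(1) c c])
    from coef_bound[OF E(1) v this, of "c m - c n"]
    have "\<bar>c m - c n\<bar> * d \<le> norm ((z m - c m *\<^sub>R v) - (z n - c n *\<^sub>R v) + (c m - c n) *\<^sub>R v)"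
      by (simp add: d_def)
    also have "(z m - c m *\<^sub>R v) - (z n - c n *\<^sub>R v) + (c m - c n) *\<^sub>R v = z m - z n"
      by (simp add: algebra_simps)
    finally show ?thesis by (simp add: dist_norm)
  qed
  have "Cauchy z" using lim by (rule LIMSEQ_imp_Cauchy)
  have "Cauchy c"
    unfolding Cauchy_def
  proof (intro allI impI)
    fix r :: real assume r: "r > 0"
    have rd: "r * d > 0" using r d by (simp add: d_def)
    obtain M where M: "\<forall>m\<ge>M. \<forall>n\<ge>M. dist (z m) (z n) < r * d"
      using \<open>Cauchy z\<close>[unfolded Cauchy_def, rule_format, OF rd] by blast
    show "\<exists>M. \<forall>m\<ge>M. \<forall>n\<ge>M. dist (c m) (c n) < r"
    proof (intro exI allI impI)
      fix m n assume "M \<le> m" "M \<le> n"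
      then have "dist (z m) (z n) < r * d" using M by blast
      then have "\<bar>c m - c n\<bar> * d < r * d" using cb[of m n] by linarith
      then show "dist (c m) (c n) < r" using d by (simp add: dist_real_def d_def)
    qed
  qed
  then obtain c0 where c0: "c \<longlonglongrightarrow> c0" using Cauchy_convergent convergent_def by blast
  have "(\<lambda>n. z n - c n *\<^sub>R v) \<longlonglongrightarrow> l - c0 *\<^sub>R v"
    by (intro tendsto_intros lim c0)
  then have "l - c0 *\<^sub>R v \<in> E"
    by (rule closed_sequentially[OF E(2) c])
  then show "l \<in> {z. \<exists>c. z - c *\<^sub>R v \<in> E}" by blast
qed

lemma proj_step:
  fixes E :: "'a::real_normed_vector set"
  assumes E: "subspace E" "closed E" and v: "v \<notin> E"
    and L1: "\<forall>y. y - projL L1 y \<in> {z. \<exists>c. z - c *\<^sub>R v \<in> E}"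
  shows "\<exists>L. \<forall>y. y - projL L y \<in> E"
proof -
  define p where "p y = y - projL L1 y" for y
  have ex: "\<exists>!c. p y - c *\<^sub>R v \<in> E" for y
  proof -
    obtain c where c: "p y - c *\<^sub>R v \<in> E" using L1 unfolding p_def by blast
    show ?thesis
    proof (rule ex1I[where a=c])
      show "p y - c *\<^sub>R v \<in> E" by (rule c)
    next
      fix c' assume "p y - c' *\<^sub>R v \<in> E"
      then show "c' = c" by (rule coef_unique[OF E(1) v _ c])
    qed
  qed
  define h where "h y = (THE c. p y - c *\<^sub>R v \<in> E)" for y
  have hP: "p y - h y *\<^sub>R v \<in> E" for y
    unfolding h_def using theI'[OF ex] .
  have huniq: "p y - c *\<^sub>R v \<in> E \<Longrightarrow> h y = c" for y c
    using coef_unique[OF E(1) v hP] by blast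
  have padd: "p (a + b) = p a + p b" for a b by (simp add: p_def projL_add)
  have pscale: "p (r *\<^sub>R a) = r *\<^sub>R p a" for r a by (simp add: p_def projL_scale scaleR_diff_right)
  have "E \<noteq> {}" using E by (auto simp: subspace_def)
  then have d: "infdist v E > 0" using E v by (simp add: infdist_pos_not_in_closed)
  define K where "K = (\<Sum>p\<leftarrow>L1. norm (fst p) * norm (snd p))"
  have hadd: "h (a + b) = h a + h b" for a b
  proof (rule huniq)
    have "(p a - h a *\<^sub>R v) + (p b - h b *\<^sub>R v) \<in> E" using hP E by (simp add: subspace_add)
    then show "p (a + b) - (h a + h b) *\<^sub>R v \<in> E" by (simp add: padd algebra_simps)
  qed
  have hscale: "h (r *\<^sub>R a) = r *\<^sub>R h a" for r a
  proof -
    have "r *\<^sub>R (p a - h a *\<^sub>R v) \<in> E" using hP E by (simp add: subspace_scale)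
    then have "p (r *\<^sub>R a) - (r * h a) *\<^sub>R v \<in> E" by (simp add: pscale algebra_simps)
    then show ?thesis using huniq[OF \<open>p (r *\<^sub>R a) - (r * h a) *\<^sub>R v \<in> E\<close>] by simp
  qed
  have hbound: "norm (h y) \<le> norm y * ((1 + K) / infdist v E)" for y
  proof -
    have "\<bar>h y\<bar> * infdist v E \<le> norm ((p y - h y *\<^sub>R v) + h y *\<^sub>R v)"
      by (rule coef_bound[OF E(1) v hP])
    also have "\<dots> = norm (p y)" by simp
    also have "\<dots> \<le> norm y + norm (projL L1 y)" unfolding p_def by (rule norm_triangle_ineq4)
    also have "\<dots> \<le> norm y + K * norm y" using projL_bound[of L1 y] by (simp add: K_def)
    finally have "\<bar>h y\<bar> * infdist v E \<le> norm y * (1 + K)" by (simp add: algebra_simps)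
    then have "\<bar>h y\<bar> \<le> norm y * (1 + K) / infdist v E" using d by (simp add: pos_le_divide_eq)
    then show ?thesis by simp
  qed
  have bl: "bounded_linear h"
    by (rule bounded_linear_intro[OF hadd hscale hbound])
  show ?thesis
  proof (intro exI allI)
    fix y
    have eq1: "projL ((Blinfun h, v) # L1) y = h y *\<^sub>R v + projL L1 y"
      by (simp add: bounded_linear_Blinfun_apply[OF bl])
    have "y - projL ((Blinfun h, v) # L1) y = y - (h y *\<^sub>R v + projL L1 y)"
      by (simp only: eq1)
    also have "y - (h y *\<^sub>R v + projL L1 y) = p y - h y *\<^sub>R v"
      unfolding p_def by (simp add: algebra_simps)
    finally show "y - projL ((Blinfun h, v) # L1) y \<in> E" using hP[of y] by simp
  qed
qed

lemma fincodim_proj_aux: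
  fixes E :: "'a::real_normed_vector set"
  assumes "finite F"
  shows "subspace E \<Longrightarrow> closed E \<Longrightarrow> span (E \<union> F) = UNIV \<Longrightarrow> \<exists>L. \<forall>y. y - projL L y \<in> E"
  using assms
proof (induction F arbitrary: E rule: finite_induct)
  case empty
  then have "E = UNIV" by (metis Un_empty_right span_eq_iff)
  then show ?case by (intro exI[of _ "[]"]) simp
next
  case (insert v F E)
  show ?case
  proof (cases "v \<in> E")
    case True
    then have "E \<union> insert v F = E \<union> F" by auto
    then show ?thesis using insert.IH[OF insert.prems(1,2)] insert.prems(3) by simp
  next
    case False
    let ?E1 = "{z. \<exists>c. z - c *\<^sub>R v \<in> E}"
    have s1: "subspace ?E1" by (rule E1_subspace[OF insert.prems(1)])
    have c1: "closed ?E1" using insert False by (intro E1_closed) auto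
    have "E \<union> insert v F \<subseteq> ?E1 \<union> F"
    proof
      fix z assume "z \<in> E \<union> insert v F"
      moreover have "z \<in> E \<Longrightarrow> z - 0 *\<^sub>R v \<in> E" by simp
      moreover have "v - 1 *\<^sub>R v \<in> E" using insert by (simp add: subspace_0)
      ultimately show "z \<in> ?E1 \<union> F" by blast
    qed
    then have "span (E \<union> insert v F) \<subseteq> span (?E1 \<union> F)" by (rule span_mono)
    then have "span (?E1 \<union> F) = UNIV" using insert.prems(3) by auto
    from insert.IH[OF s1 c1 this] obtain L1 where "\<forall>y. y - projL L1 y \<in> ?E1" by blast
    from proj_step[OF insert.prems(1,2) False this] show ?thesis .
  qed
qed

lemma fincodim_proj:
  fixes E :: "'a::real_normed_vector set"
  assumes "E \<in> fincodim_subspaces"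
  shows "\<exists>L. \<forall>y. y - projL L y \<in> E"
  using assms fincodim_proj_aux unfolding fincodim_subspaces_def by blast

lemma UNIV_fincodim: "(UNIV::'a::real_normed_vector set) \<in> fincodim_subspaces"
  unfolding fincodim_subspaces_def by (auto intro!: exI[of _ "{}"])

lemma aus_local:
  assumes aus: "asymptotically_uniformly_smooth TYPE('a::real_normed_vector)"
    and eps: "\<epsilon> > 0"
  shows "\<exists>t>0. \<forall>x::'a. \<exists>E\<in>fincodim_subspaces. \<forall>e\<in>E.
           norm e \<le> t * norm x \<longrightarrow> norm (x + e) \<le> norm x + \<epsilon> * norm e"
proof -
  let ?r = "aus_modulus TYPE('a)"
  have lim: "((\<lambda>t. ?r t / ereal t) \<longlongrightarrow> 0) (at_right 0)"
    using aus by (simp add: asymptotically_uniformly_smooth_def)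
  have "(0::ereal) < ereal (\<epsilon>/2)" using eps by (simp add: zero_ereal_def)
  from order_tendstoD(2)[OF lim this]
  have ev: "eventually (\<lambda>t. ?r t / ereal t < ereal (\<epsilon>/2)) (at_right 0)" .
  have "eventually (\<lambda>t. 0 < t) (at_right (0::real))" by (rule eventually_at_right_less)
  with ev have "eventually (\<lambda>t. 0 < t \<and> ?r t / ereal t < ereal (\<epsilon>/2)) (at_right 0)"
    by (rule eventually_conj[rotated])
  then obtain t where t: "0 < t" and rt: "?r t / ereal t < ereal (\<epsilon>/2)"
    using eventually_happens'[OF trivial_limit_at_right_real] by blast
  have rt2: "?r t < ereal (\<epsilon> * t / 2)"
  proof (cases "?r t" rule: ereal_cases)
    case (real r)
    then have "r / t < \<epsilon> / 2" using rt t by simp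
    then have "r < \<epsilon> * t / 2" using t by (simp add: field_simps)
    then show ?thesis using real by simp
  next
    case PInf
    then show ?thesis using rt t by simp
  next
    case MInf
    then show ?thesis by simp
  qed
  have main: "\<exists>E\<in>fincodim_subspaces. \<forall>e\<in>E.
           norm e \<le> t * norm x \<longrightarrow> norm (x + e) \<le> norm x + \<epsilon> * norm e" for x :: 'a
  proof (cases "x = 0")
    case True
    show ?thesis using True by (intro bexI[OF _ UNIV_fincodim]) (auto simp: t)
  next
    case False
    define u where "u = x /\<^sub>R norm x"
    have nx: "norm x > 0" using False by simp
    have u: "u \<in> sphere 0 1" using False by (simp add: u_def)
    have "(INF E\<in>(fincodim_subspaces :: 'a set set).
        SUP h\<in>sphere 0 1 \<inter> E. ereal (norm (u + t *\<^sub>R h) - 1)) \<le> ?r t"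
      unfolding aus_modulus_def by (rule SUP_upper[OF u])
    then have "(INF E\<in>(fincodim_subspaces :: 'a set set).
        SUP h\<in>sphere 0 1 \<inter> E. ereal (norm (u + t *\<^sub>R h) - 1)) < ereal (\<epsilon> * t / 2)"
      using rt2 by (rule le_less_trans)
    then obtain E where E: "E \<in> fincodim_subspaces"
      and ES: "(SUP h\<in>sphere 0 1 \<inter> E. ereal (norm (u + t *\<^sub>R h) - 1)) < ereal (\<epsilon> * t / 2)"
      by (auto simp: INF_less_iff)
    have hb: "norm (u + t *\<^sub>R h) \<le> 1 + \<epsilon> * t / 2" if "h \<in> sphere 0 1 \<inter> E" for h
    proof -
      have "ereal (norm (u + t *\<^sub>R h) - 1) \<le> (SUP h\<in>sphere 0 1 \<inter> E. ereal (norm (u + t *\<^sub>R h) - 1))"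
        by (rule SUP_upper[OF that])
      then have "ereal (norm (u + t *\<^sub>R h) - 1) < ereal (\<epsilon> * t / 2)" using ES by (rule le_less_trans)
      then show ?thesis by simp
    qed
    have sE: "subspace E" using E by (simp add: fincodim_subspaces_def)
    show ?thesis
    proof (intro bexI[OF _ E] ballI impI)
      fix e assume eE: "e \<in> E" and le: "norm e \<le> t * norm x"
      show "norm (x + e) \<le> norm x + \<epsilon> * norm e"
      proof (cases "e = 0")
        case True then show ?thesis by simp
      next
        case False
        define h where "h = e /\<^sub>R norm e"
        define s where "s = norm e / norm x"
        have hE: "h \<in> sphere 0 1 \<inter> E" using False eE sE by (simp add: h_def subspace_scale)
        have s0: "0 < s" using False nx by (simp add: s_def)
        have st: "s \<le> t" using le nx by (simp add: s_def field_simps)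
        have eq: "(x + e) /\<^sub>R norm x = (1 - s/t) *\<^sub>R u + (s/t) *\<^sub>R (u + t *\<^sub>R h)"
          using t False nx by (simp add: u_def h_def s_def algebra_simps inverse_eq_divide)
        have "norm ((x + e) /\<^sub>R norm x) \<le> norm ((1 - s/t) *\<^sub>R u) + norm ((s/t) *\<^sub>R (u + t *\<^sub>R h))"
          unfolding eq by (rule norm_triangle_ineq)
        also have "\<dots> = (1 - s/t) + (s/t) * norm (u + t *\<^sub>R h)"
          using u s0 st t by simp
        also have "\<dots> \<le> (1 - s/t) + (s/t) * (1 + \<epsilon> * t / 2)"
          using hb[OF hE] s0 t by (intro add_left_mono mult_left_mono) auto
        also have "\<dots> = 1 + s * \<epsilon> / 2" using t by (simp add: field_simps)
        finally have nb: "norm ((x + e) /\<^sub>R norm x) \<le> 1 + s * \<epsilon> / 2" .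
        have nq: "norm ((x + e) /\<^sub>R norm x) = norm (x + e) / norm x"
          unfolding norm_scaleR using nx by (simp add: divide_inverse mult.commute)
        from nb have "norm (x + e) / norm x \<le> 1 + s * \<epsilon> / 2" unfolding nq .
        then have "norm (x + e) \<le> norm x + norm e * \<epsilon> / 2"
          using nx by (simp add: s_def field_simps)
        also have "\<dots> \<le> norm x + \<epsilon> * norm e" using eps by simp
        finally show ?thesis .
      qed
    qed
  qed
  show ?thesis using t main by blast
qed

lemma cesaro0:
  fixes c :: "nat \<Rightarrow> real"
  assumes lim: "c \<longlonglongrightarrow> 0" and nn: "\<And>n. c n \<ge> 0"
  shows "(\<lambda>K. (\<Sum>j<Suc K. c j) / real (Suc K)) \<longlonglongrightarrow> 0"
proof (rule LIMSEQ_I)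
  fix r :: real assume r: "r > 0"
  then have "r/2 > 0" by simp
  from LIMSEQ_D[OF lim this] obtain N where N: "\<And>n. n \<ge> N \<Longrightarrow> norm (c n - 0) < r/2" by blast
  define C0 where "C0 = (\<Sum>j<N. c j)"
  have C0: "C0 \<ge> 0" unfolding C0_def using nn by (simp add: sum_nonneg)
  have sb: "(\<Sum>j<M. c j) \<le> C0 + real M * (r/2)" for M
  proof (induction M)
    case 0 then show ?case using C0 by simp
  next
    case (Suc M)
    show ?case
    proof (cases "M < N")
      case True
      have "(\<Sum>j<Suc M. c j) \<le> C0" unfolding C0_def
        using True nn by (intro sum_mono2) auto
      moreover have "0 \<le> real (Suc M) * (r/2)" using r by simp
      ultimately show ?thesis by linarith
    next
      case False
      then have "c M < r/2" using N[of M] nn[of M] by simp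
      have "(\<Sum>j<Suc M. c j) = (\<Sum>j<M. c j) + c M" by simp
      moreover have "real (Suc M) * (r/2) = real M * (r/2) + r/2" by (simp add: algebra_simps)
      ultimately show ?thesis using Suc.IH \<open>c M < r/2\<close> by linarith
    qed
  qed
  obtain K0 :: nat where K0: "real K0 > 2 * C0 / r" using reals_Archimedean2 by blast
  show "\<exists>no. \<forall>n\<ge>no. norm ((\<Sum>j<Suc n. c j) / real (Suc n) - 0) < r"
  proof (intro exI allI impI)
    fix n assume "n \<ge> K0"
    then have Kn: "real (Suc n) > 2 * C0 / r" using K0 by simp
    have pos: "real (Suc n) > 0" by simp
    have s0: "(\<Sum>j<Suc n. c j) \<ge> 0" using nn by (simp add: sum_nonneg)
    have h1: "(\<Sum>j<Suc n. c j) \<le> C0 + real (Suc n) * (r/2)" by (rule sb)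
    have h2: "C0 < real (Suc n) * (r/2)" using Kn r by (simp add: field_simps)
    have hh: "real (Suc n) * (r/2) * 2 = real (Suc n) * r" by simp
    have "(\<Sum>j<Suc n. c j) < real (Suc n) * r" using h1 h2 hh by linarith
    then have "(\<Sum>j<Suc n. c j) / real (Suc n) < r" using pos by (auto simp: divide_less_eq algebra_simps)
    then show "norm ((\<Sum>j<Suc n. c j) / real (Suc n) - 0) < r" using s0 by simp
  qed
qed

primrec gst :: "(nat \<Rightarrow> 'a \<Rightarrow> nat \<Rightarrow> 'i) \<Rightarrow> ('i \<Rightarrow> nat) \<Rightarrow> ('i \<Rightarrow> 'a::real_normed_vector) \<Rightarrow> nat \<Rightarrow> nat \<times> 'a" where
  "gst ch nx vv 0 = (0, 0)"
| "gst ch nx vv (Suc k) =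
     (nx (ch k (snd (gst ch nx vv k)) (fst (gst ch nx vv k))),
      snd (gst ch nx vv k) + vv (ch k (snd (gst ch nx vv k)) (fst (gst ch nx vv k))))"

lemma greedy:
  fixes vv :: "'i \<Rightarrow> 'a::real_normed_vector" and avail :: "nat \<Rightarrow> 'i set" and nx :: "'i \<Rightarrow> nat"
  assumes aus: "asymptotically_uniformly_smooth TYPE('a)"
    and Bd: "\<And>i. norm (vv i) \<le> B"
    and av: "\<And>N E \<delta>. E \<in> fincodim_subspaces \<Longrightarrow> \<delta> > 0 \<Longrightarrow> \<exists>i\<in>avail N. \<exists>e\<in>E. norm (vv i - e) < \<delta>"
  shows "\<exists>s. s 0 \<in> avail 0 \<and> (\<forall>k. s (Suc k) \<in> avail (nx (s k))) \<and>
             ((\<lambda>K. (1 / real (Suc K)) *\<^sub>R (\<Sum>k\<le>K. vv (s k))) \<longlonglongrightarrow> 0)"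
proof -
  have B0: "B \<ge> 0" using Bd[of undefined] norm_ge_zero[of "vv undefined"] by linarith
  have "\<forall>\<epsilon>. \<exists>t. \<epsilon> > 0 \<longrightarrow> (t > 0 \<and> (\<forall>x::'a. \<exists>E\<in>fincodim_subspaces. \<forall>e\<in>E.
           norm e \<le> t * norm x \<longrightarrow> norm (x + e) \<le> norm x + \<epsilon> * norm e))"
    using aus_local[OF aus] by blast
  from choice[OF this] obtain tt where tt: "\<And>\<epsilon>. \<epsilon> > 0 \<Longrightarrow> tt \<epsilon> > 0 \<and> (\<forall>x::'a. \<exists>E\<in>fincodim_subspaces. \<forall>e\<in>E.
           norm e \<le> tt \<epsilon> * norm x \<longrightarrow> norm (x + e) \<le> norm x + \<epsilon> * norm e)" by blast
  define EE where "EE \<epsilon> x = (SOME E. E \<in> fincodim_subspaces \<and> (\<forall>e\<in>E.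
           norm e \<le> tt \<epsilon> * norm x \<longrightarrow> norm (x + e) \<le> norm x + \<epsilon> * norm e))" for \<epsilon> and x :: 'a
  have EE: "EE \<epsilon> x \<in> fincodim_subspaces \<and> (\<forall>e\<in>EE \<epsilon> x.
           norm e \<le> tt \<epsilon> * norm x \<longrightarrow> norm (x + e) \<le> norm x + \<epsilon> * norm e)" if "\<epsilon> > 0" for \<epsilon> x
    unfolding EE_def by (rule someI_ex) (use tt[OF that] in blast)
  define D where "D m = (B + 1) / tt (1 / (real m + 1)) + B" for m :: nat
  have D0: "D m \<ge> 0" for m
  proof -
    have "tt (1 / (real m + 1)) > 0" using tt by simp
    then show ?thesis using B0 by (simp add: D_def)
  qed
  define MS where "MS k = {0} \<union> {m. m \<le> k \<and> D m \<le> sqrt (real k)}" for k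
  define mm where "mm k = Max (MS k)" for k
  have MSfin: "finite (MS k)" for k unfolding MS_def by (rule finite_UnI) auto
  have mmin: "mm k \<in> MS k" for k unfolding mm_def by (rule Max_in[OF MSfin]) (simp add: MS_def)
  have Dmm: "D (mm k) \<le> max (D 0) (sqrt (real k))" for k
    using mmin[of k] unfolding MS_def by auto
  have mmge: "m \<le> mm k" if "m \<le> k" "D m \<le> sqrt (real k)" for m k
    unfolding mm_def by (rule Max_ge[OF MSfin]) (use that in \<open>simp add: MS_def\<close>)
  define eps where "eps k = 1 / (real (mm k) + 1)" for k
  define eta where "eta k = 1 / (real k + 1)" for k :: nat
  have eps0: "eps k > 0" for k by (simp add: eps_def)
  have eta0: "eta k > 0" "eta k \<le> 1" for k by (auto simp: eta_def field_simps)
  define ch where "ch K S N = (SOME i. i \<in> avail N \<and> (\<exists>e\<in>EE (eps K) S. norm (vv i - e) < eta K))" for K S N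
  have chP: "ch K S N \<in> avail N \<and> (\<exists>e\<in>EE (eps K) S. norm (vv (ch K S N) - e) < eta K)" for K S N
  proof -
    have "EE (eps K) S \<in> fincodim_subspaces" using EE[OF eps0] by blast
    from av[OF this eta0(1)] have "\<exists>i. i \<in> avail N \<and> (\<exists>e\<in>EE (eps K) S. norm (vv i - e) < eta K)"
      by blast
    then show ?thesis unfolding ch_def by (rule someI_ex)
  qed
  define st where "st = gst ch nx vv"
  define s where "s k = ch k (snd (st k)) (fst (st k))" for k
  define A where "A k = snd (st k)" for k
  have A0: "A 0 = 0" by (simp add: A_def st_def)
  have AS: "A (Suc k) = A k + vv (s k)" for k by (simp add: A_def st_def s_def)
  have fS: "fst (st (Suc k)) = nx (s k)" for k by (simp add: st_def s_def)
  have s0: "s 0 \<in> avail 0" using chP[of 0 "snd (st 0)" "fst (st 0)"] by (simp add: s_def st_def)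
  have sS: "s (Suc k) \<in> avail (nx (s k))" for k
    using chP[of "Suc k" "snd (st (Suc k))" "fst (st (Suc k))"] by (simp add: s_def[of "Suc k"] fS)
  have Asum: "A k = (\<Sum>j<k. vv (s j))" for k
    by (induction k) (simp_all add: A0 AS)
  define c where "c k = eps k * (B + 1) + eta k" for k
  have c0: "c k \<ge> 0" for k using eps0[of k] eta0[of k] B0 by (simp add: c_def)
  have key: "norm (A k) \<le> max (D 0) (sqrt (real k)) + (\<Sum>j<k. c j)" for k
  proof (induction k)
    case 0 then show ?case using D0[of 0] by (simp add: A0)
  next
    case (Suc k)
    obtain e where eE: "e \<in> EE (eps k) (A k)" and ev: "norm (vv (s k) - e) < eta k"
      using chP[of k "A k" "fst (st k)"] by (auto simp: s_def A_def)
    have ne: "norm e \<le> B + 1"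
    proof -
      have "norm e \<le> norm (vv (s k)) + norm (vv (s k) - e)"
        using norm_triangle_ineq4[of "vv (s k)" "vv (s k) - e"] by simp
      then show ?thesis using Bd[of "s k"] ev eta0(2)[of k] by linarith
    qed
    have sc: "(\<Sum>j<k. c j) \<le> (\<Sum>j<Suc k. c j)" using c0[of k] by simp
    have mono: "max (D 0) (sqrt (real k)) \<le> max (D 0) (sqrt (real (Suc k)))"
      by (intro max.mono order.refl real_sqrt_le_mono) simp
    have tri: "norm (A (Suc k)) \<le> norm (A k + e) + norm (vv (s k) - e)"
    proof -
      have "A (Suc k) = (A k + e) + (vv (s k) - e)" by (simp add: AS)
      then show ?thesis by (metis norm_triangle_ineq)
    qed
    show ?case
    proof (cases "norm e \<le> tt (eps k) * norm (A k)")
      case True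
      then have "norm (A k + e) \<le> norm (A k) + eps k * norm e"
        using EE[OF eps0[of k], of "A k"] eE by blast
      also have "eps k * norm e \<le> eps k * (B + 1)" using ne eps0[of k] by (simp add: mult_left_mono)
      finally have "norm (A (Suc k)) \<le> norm (A k) + c k" using tri ev by (simp add: c_def)
      then show ?thesis using Suc.IH mono by simp
    next
      case False
      have tp: "tt (eps k) > 0" using tt eps0 by blast
      have "tt (eps k) * norm (A k) < B + 1" using False ne by linarith
      then have "norm (A k) < (B + 1) / tt (eps k)" using tp by (simp add: field_simps)
      moreover have "norm (A (Suc k)) \<le> norm (A k) + B"
        using Bd[of "s k"] norm_triangle_ineq[of "A k" "vv (s k)"] by (simp add: AS)
      ultimately have "norm (A (Suc k)) < D (mm k)" by (simp add: D_def eps_def)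
      also have "\<dots> \<le> max (D 0) (sqrt (real k))" by (rule Dmm)
      finally show ?thesis using mono sum_nonneg[of "{..<Suc k}" c] c0 by (smt (verit))
    qed
  qed
  have mmlim: "eps \<longlonglongrightarrow> 0"
  proof (rule LIMSEQ_I)
    fix r :: real assume r: "r > 0"
    obtain m0 :: nat where m0: "real m0 > 1 / r" using reals_Archimedean2 by blast
    obtain k0 :: nat where k0: "real k0 > (D m0)^2" using reals_Archimedean2 by blast
    show "\<exists>no. \<forall>n\<ge>no. norm (eps n - 0) < r"
    proof (intro exI allI impI)
      fix n assume n: "n \<ge> max m0 k0"
      have "(D m0)^2 \<le> real n" using n k0 by simp
      then have "sqrt ((D m0)^2) \<le> sqrt (real n)" by (rule real_sqrt_le_mono)
      then have "D m0 \<le> sqrt (real n)" using D0[of m0] by simp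
      then have "m0 \<le> mm n" using n by (intro mmge) auto
      then have "real m0 + 1 \<le> real (mm n) + 1" by simp
      then have "eps n \<le> 1 / (real m0 + 1)" unfolding eps_def
        by (intro divide_left_mono) auto
      also have "1 / (real m0 + 1) < r" using m0 r by (simp add: field_simps)
      finally show "norm (eps n - 0) < r" using eps0[of n] by simp
    qed
  qed
  have etalim: "eta \<longlonglongrightarrow> 0"
    unfolding eta_def using LIMSEQ_inverse_real_of_nat by (simp add: inverse_eq_divide add.commute)
  have clim: "c \<longlonglongrightarrow> 0"
  proof -
    have "(\<lambda>k. eps k * (B + 1) + eta k) \<longlonglongrightarrow> 0 * (B + 1) + 0"
      by (intro tendsto_intros mmlim etalim)
    then show ?thesis by (simp add: c_def[abs_def])
  qed
  have g1: "(\<lambda>K. D 0 / real (Suc K)) \<longlonglongrightarrow> 0"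
    using LIMSEQ_Suc[OF lim_const_over_n[of "D 0"]] by simp
  have g2: "(\<lambda>K. sqrt (inverse (real (Suc K)))) \<longlonglongrightarrow> 0"
    using tendsto_real_sqrt[OF LIMSEQ_inverse_real_of_nat] by simp
  have g3: "(\<lambda>K. (\<Sum>j<Suc K. c j) / real (Suc K)) \<longlonglongrightarrow> 0" by (rule cesaro0[OF clim c0])
  have glim: "(\<lambda>K. D 0 / real (Suc K) + sqrt (inverse (real (Suc K))) + (\<Sum>j<Suc K. c j) / real (Suc K)) \<longlonglongrightarrow> 0"
    using tendsto_add[OF tendsto_add[OF g1 g2] g3] by simp
  have bound: "norm ((1 / real (Suc K)) *\<^sub>R (\<Sum>k\<le>K. vv (s k)))
     \<le> D 0 / real (Suc K) + sqrt (inverse (real (Suc K))) + (\<Sum>j<Suc K. c j) / real (Suc K)" for K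
  proof -
    have eqs: "(\<Sum>k\<le>K. vv (s k)) = A (Suc K)" by (simp add: Asum lessThan_Suc_atMost)
    have "max (D 0) (sqrt (real (Suc K))) \<le> D 0 + sqrt (real (Suc K))" using D0[of 0] by simp
    then have "norm (A (Suc K)) \<le> D 0 + sqrt (real (Suc K)) + (\<Sum>j<Suc K. c j)"
      using key[of "Suc K"] by linarith
    then have "norm (A (Suc K)) / real (Suc K) \<le> (D 0 + sqrt (real (Suc K)) + (\<Sum>j<Suc K. c j)) / real (Suc K)"
      by (intro divide_right_mono) auto
    also have "\<dots> = D 0 / real (Suc K) + sqrt (real (Suc K)) / real (Suc K) + (\<Sum>j<Suc K. c j) / real (Suc K)"
      by (simp add: add_divide_distrib)
    also have "sqrt (real (Suc K)) / real (Suc K) = sqrt (inverse (real (Suc K)))"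
    proof -
      have "real (Suc K) = sqrt (real (Suc K)) * sqrt (real (Suc K))" by simp
      then have "sqrt (real (Suc K)) / real (Suc K) = inverse (sqrt (real (Suc K)))"
        by (metis divide_self_if mult_cancel_left1 real_sqrt_eq_zero_cancel_iff of_nat_eq_0_iff
              nat.distinct(1) divide_divide_eq_right divide_inverse mult.commute inverse_eq_divide)
      then show ?thesis by (simp add: real_sqrt_inverse)
    qed
    finally show ?thesis unfolding eqs by simp
  qed
  have "(\<lambda>K. (1 / real (Suc K)) *\<^sub>R (\<Sum>k\<le>K. vv (s k))) \<longlonglongrightarrow> 0"
    by (rule Lim_null_comparison[OF always_eventually glim]) (use bound in blast)
  then show ?thesis using s0 sS by blast
qed

lemma ultra_limits:
  fixes x :: "nat \<Rightarrow> 'a::real_normed_vector" and U :: "nat filter"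
  assumes U: "U \<noteq> bot" "\<forall>P. eventually P U \<or> eventually (\<lambda>x. \<not> P x) U"
    and M: "\<And>n. norm (x n) \<le> M"
  shows "\<exists>lU. \<forall>g::'a \<Rightarrow>\<^sub>L real. ((\<lambda>n. blinfun_apply g (x n)) \<longlongrightarrow> lU g) U"
proof -
  have "\<forall>g::'a \<Rightarrow>\<^sub>L real. \<exists>l. ((\<lambda>n. blinfun_apply g (x n)) \<longlongrightarrow> l) U"
  proof
    fix g :: "'a \<Rightarrow>\<^sub>L real"
    have "\<bar>blinfun_apply g (x n)\<bar> \<le> norm g * M" for n
    proof -
      have "\<bar>blinfun_apply g (x n)\<bar> \<le> norm g * norm (x n)" using norm_blinfun[of g "x n"] by simp
      also have "\<dots> \<le> norm g * M" using M[of n] by (simp add: mult_left_mono)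
      finally show ?thesis .
    qed
    then show "\<exists>l. ((\<lambda>n. blinfun_apply g (x n)) \<longlongrightarrow> l) U" by (rule ultra_lim[OF U])
  qed
  then show ?thesis by (rule choice)
qed

lemma ultra_near:
  fixes x :: "nat \<Rightarrow> 'a::real_normed_vector" and U :: "nat filter"
  assumes lU: "\<forall>g::'a \<Rightarrow>\<^sub>L real. ((\<lambda>n. blinfun_apply g (x n)) \<longlongrightarrow> lU g) U"
    and UL: "U \<le> sequentially" and eta: "\<eta> > 0"
  shows "eventually (\<lambda>n. N < n \<and> (\<forall>p\<in>set L. \<bar>blinfun_apply (fst p) (x n) - lU (fst p)\<bar> < \<eta>)) U"
proof -
  have "\<forall>p\<in>set L. eventually (\<lambda>n. \<bar>blinfun_apply (fst p) (x n) - lU (fst p)\<bar> < \<eta>) U"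
  proof
    fix p assume "p \<in> set L"
    from tendstoD[OF lU[rule_format, of "fst p"] eta]
    show "eventually (\<lambda>n. \<bar>blinfun_apply (fst p) (x n) - lU (fst p)\<bar> < \<eta>) U"
      by (simp add: dist_real_def)
  qed
  then have e1: "eventually (\<lambda>n. \<forall>p\<in>set L. \<bar>blinfun_apply (fst p) (x n) - lU (fst p)\<bar> < \<eta>) U"
    by (rule eventually_ball_finite[OF finite_set])
  have "eventually (\<lambda>n. N < n) sequentially" by (rule eventually_gt_at_top)
  then have e2: "eventually (\<lambda>n. N < n) U" using UL by (simp add: le_filter_def)
  show ?thesis using eventually_conj[OF e2 e1] .
qed

lemma sumf_nonneg: "(\<Sum>p\<leftarrow>L. norm (snd p)) \<ge> (0::real)"
  by (rule sum_list_nonneg) auto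

theorem ABS_thm:
  assumes aus: "asymptotically_uniformly_smooth TYPE('a::real_normed_vector)"
  shows "alternating_banach_saks TYPE('a)"
  unfolding alternating_banach_saks_def
proof (intro allI impI)
  fix x :: "nat \<Rightarrow> 'a" assume "bounded (range x)"
  then obtain M where M: "\<And>n. norm (x n) \<le> M" unfolding bounded_iff by auto
  obtain U :: "nat filter" where U: "U \<noteq> bot" "U \<le> sequentially"
    "\<forall>P. eventually P U \<or> eventually (\<lambda>x. \<not> P x) U" using ex_ultra_seq by blast
  obtain lU where lU: "\<forall>g::'a \<Rightarrow>\<^sub>L real. ((\<lambda>n. blinfun_apply g (x n)) \<longlongrightarrow> lU g) U"
    using ultra_limits[of U x M, OF U(1,3) M] by blast
  define vv where "vv p = x (fst p) - x (snd p)" for p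
  define avail where "avail N = {p::nat\<times>nat. N < fst p \<and> fst p < snd p}" for N :: nat
  have Bd: "norm (vv p) \<le> 2 * M" for p
    using norm_triangle_ineq4[of "x (fst p)" "x (snd p)"] M[of "fst p"] M[of "snd p"]
    by (simp add: vv_def)
  have av: "\<exists>i\<in>avail N. \<exists>e\<in>E. norm (vv i - e) < \<delta>"
    if E: "E \<in> fincodim_subspaces" and d: "\<delta> > 0" for N E \<delta>
  proof -
    obtain L where L: "\<forall>y. y - projL L y \<in> E" using fincodim_proj[OF E] by blast
    define Sf where "Sf = (\<Sum>p\<leftarrow>L. norm (snd p))"
    have Sf0: "Sf \<ge> 0" unfolding Sf_def by (rule sumf_nonneg)
    define \<eta> where "\<eta> = \<delta> / (2 * Sf + 1)"
    have eta: "\<eta> > 0" using d Sf0 by (simp add: \<eta>_def)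
    have ev: "\<And>N. eventually (\<lambda>n. N < n \<and> (\<forall>p\<in>set L. \<bar>blinfun_apply (fst p) (x n) - lU (fst p)\<bar> < \<eta>)) U"
      by (rule ultra_near[OF lU U(2) eta])
    obtain a where a: "N < a" "\<forall>p\<in>set L. \<bar>blinfun_apply (fst p) (x a) - lU (fst p)\<bar> < \<eta>"
      using eventually_happens'[OF U(1) ev[of N]] by blast
    obtain b where b: "a < b" "\<forall>p\<in>set L. \<bar>blinfun_apply (fst p) (x b) - lU (fst p)\<bar> < \<eta>"
      using eventually_happens'[OF U(1) ev[of a]] by blast
    have small: "\<forall>p\<in>set L. \<bar>blinfun_apply (fst p) (vv (a, b))\<bar> \<le> 2 * \<eta>"
    proof
      fix p assume "p \<in> set L"
      then have "\<bar>blinfun_apply (fst p) (x a) - lU (fst p)\<bar> < \<eta>" "\<bar>blinfun_apply (fst p) (x b) - lU (fst p)\<bar> < \<eta>"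
        using a b by auto
      then show "\<bar>blinfun_apply (fst p) (vv (a, b))\<bar> \<le> 2 * \<eta>"
        by (simp add: vv_def blinfun.diff_right abs_diff_less_iff abs_le_iff)
    qed
    have "norm (projL L (vv (a, b))) \<le> 2 * \<eta> * Sf" unfolding Sf_def by (rule projL_small[OF small])
    also have "2 * \<eta> * Sf < \<delta>" using d Sf0 by (simp add: \<eta>_def field_simps)
    finally have "norm (vv (a, b) - (vv (a, b) - projL L (vv (a, b)))) < \<delta>" by simp
    moreover have "(a, b) \<in> avail N" using a b by (simp add: avail_def)
    ultimately show ?thesis using L by blast
  qed
  from greedy[where nx=snd and avail=avail and vv=vv, OF aus Bd av]
  obtain s where s0: "s 0 \<in> avail 0" and sS: "\<And>k. s (Suc k) \<in> avail (snd (s k))"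
    and slim: "(\<lambda>K. (1 / real (Suc K)) *\<^sub>R (\<Sum>k\<le>K. vv (s k))) \<longlonglongrightarrow> 0" by blast
  have fs: "fst (s k) < snd (s k)" for k
    using s0 sS[of "k - 1"] by (cases k) (auto simp: avail_def)
  have sf: "snd (s k) < fst (s (Suc k))" for k using sS[of k] by (simp add: avail_def)
  define r where "r j = (if even j then fst (s (j div 2)) else snd (s (j div 2)))" for j :: nat
  define \<epsilon> where "\<epsilon> j = (if even j then 1 else - 1 :: real)" for j :: nat
  have r2: "r (2 * k) = fst (s k)" "r (Suc (2 * k)) = snd (s k)" for k :: nat by (simp_all add: r_def)
  have e2: "\<epsilon> (2 * k) = 1" "\<epsilon> (Suc (2 * k)) = - 1" for k :: nat by (simp_all add: \<epsilon>_def)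
  have "strict_mono r"
    unfolding strict_mono_Suc_iff
  proof
    fix j
    show "r j < r (Suc j)"
    proof (cases "even j")
      case True
      then obtain k where "j = 2 * k" by (rule evenE)
      then show ?thesis using fs[of k] r2 by simp
    next
      case False
      then obtain k where "j = 2 * k + 1" by (rule oddE)
      then have k: "j = Suc (2 * k)" by simp
      have "Suc j = 2 * Suc k" using k by simp
      have "r (Suc j) = fst (s (Suc k))" unfolding \<open>Suc j = 2 * Suc k\<close> by (rule r2(1))
      then show ?thesis using sf[of k] r2(2)[of k] k by simp
    qed
  qed
  have eps: "\<forall>j. \<epsilon> j \<in> {-1, 1}" by (simp add: \<epsilon>_def)
  define Q where "Q K = (\<Sum>k<K. vv (s k))" for K
  have sum2: "(\<Sum>j<2 * K. \<epsilon> j *\<^sub>R x (r j)) = Q K" for K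
  proof (induction K)
    case 0 then show ?case by (simp add: Q_def)
  next
    case (Suc K)
    have "2 * Suc K = Suc (Suc (2 * K))" by simp
    then have "(\<Sum>j<2 * Suc K. \<epsilon> j *\<^sub>R x (r j)) =
        (\<Sum>j<2 * K. \<epsilon> j *\<^sub>R x (r j)) + \<epsilon> (2 * K) *\<^sub>R x (r (2 * K)) + \<epsilon> (Suc (2 * K)) *\<^sub>R x (r (Suc (2 * K)))"
      by simp
    also have "\<dots> = Q K + vv (s K)" using Suc by (simp add: r2 e2 vv_def)
    finally show ?case by (simp add: Q_def)
  qed
  define q where "q K = norm (Q K) / real K" for K
  have qlim: "q \<longlonglongrightarrow> 0"
  proof (rule LIMSEQ_imp_Suc)
    have "(\<lambda>K. norm ((1 / real (Suc K)) *\<^sub>R (\<Sum>k\<le>K. vv (s k)))) \<longlonglongrightarrow> 0"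
      using tendsto_norm_zero[OF slim] .
    moreover have "norm ((1 / real (Suc K)) *\<^sub>R (\<Sum>k\<le>K. vv (s k))) = q (Suc K)" for K
      by (simp add: q_def Q_def lessThan_Suc_atMost)
    ultimately show "(\<lambda>K. q (Suc K)) \<longlonglongrightarrow> 0" by simp
  qed
  have fl: "filterlim (\<lambda>n::nat. Suc n div 2) sequentially sequentially"
    unfolding filterlim_at_top
  proof
    fix Z :: nat
    show "eventually (\<lambda>n. Z \<le> Suc n div 2) sequentially"
      unfolding eventually_sequentially by (intro exI[of _ "2 * Z"]) auto
  qed
  have q2: "(\<lambda>n. q (Suc n div 2)) \<longlonglongrightarrow> 0" by (rule filterlim_compose[OF qlim fl])
  have Ml: "(\<lambda>n. M / real (Suc n)) \<longlonglongrightarrow> 0"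
    using LIMSEQ_Suc[OF lim_const_over_n[of M]] by simp
  have glim: "(\<lambda>n. q (Suc n div 2) + M / real (Suc n)) \<longlonglongrightarrow> 0"
    using tendsto_add[OF q2 Ml] by simp
  have bound: "norm ((1 / real (Suc n)) *\<^sub>R (\<Sum>j\<le>n. \<epsilon> j *\<^sub>R x (r j))) \<le> q (Suc n div 2) + M / real (Suc n)" for n
  proof -
    define K where "K = Suc n div 2"
    have sn: "norm (\<Sum>j\<le>n. \<epsilon> j *\<^sub>R x (r j)) \<le> norm (Q K) + M"
    proof (cases "even (Suc n)")
      case True
      then have "Suc n = 2 * K" by (simp add: K_def)
      then have "(\<Sum>j\<le>n. \<epsilon> j *\<^sub>R x (r j)) = Q K"
        using sum2[of K] by (simp add: lessThan_Suc_atMost[symmetric])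
      moreover have "0 \<le> M" using M[of 0] norm_ge_zero[of "x 0"] by linarith
      ultimately show ?thesis by simp
    next
      case False
      then have "Suc n = Suc (2 * K)" by (simp add: K_def)
      then have "(\<Sum>j\<le>n. \<epsilon> j *\<^sub>R x (r j)) = Q K + x (r (2 * K))"
        using sum2[of K] by (simp add: lessThan_Suc_atMost[symmetric] e2)
      then show ?thesis using M[of "r (2 * K)"] norm_triangle_ineq[of "Q K" "x (r (2 * K))"] by simp
    qed
    have "norm ((1 / real (Suc n)) *\<^sub>R (\<Sum>j\<le>n. \<epsilon> j *\<^sub>R x (r j))) = norm (\<Sum>j\<le>n. \<epsilon> j *\<^sub>R x (r j)) / real (Suc n)"
      by simp
    also have "\<dots> \<le> (norm (Q K) + M) / real (Suc n)" using sn by (simp add: divide_right_mono)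
    also have "\<dots> = norm (Q K) / real (Suc n) + M / real (Suc n)" by (simp add: add_divide_distrib)
    also have "norm (Q K) / real (Suc n) \<le> q K"
    proof (cases "K = 0")
      case True then show ?thesis by (simp add: q_def Q_def)
    next
      case False
      have "real K \<le> real (Suc n)" by (simp add: K_def)
      then show ?thesis unfolding q_def using False by (intro divide_left_mono) auto
    qed
    finally show ?thesis by (simp add: K_def)
  qed
  have "(\<lambda>n. (1 / real (Suc n)) *\<^sub>R (\<Sum>j\<le>n. \<epsilon> j *\<^sub>R x (r j))) \<longlonglongrightarrow> 0"
    by (rule Lim_null_comparison[OF always_eventually glim]) (use bound in blast)
  then have "convergent (\<lambda>n. (1 / real (Suc n)) *\<^sub>R (\<Sum>j\<le>n. \<epsilon> j *\<^sub>R x (r j)))"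
    by (rule convergentI)
  then show "\<exists>r \<epsilon>. strict_mono r \<and> (\<forall>j. \<epsilon> j \<in> {-1, 1::real}) \<and>
           convergent (\<lambda>k. (1 / real (Suc k)) *\<^sub>R (\<Sum>j\<le>k. \<epsilon> j *\<^sub>R x (r j)))"
    using \<open>strict_mono r\<close> eps by blast
qed

theorem BS_thm:
  assumes aus: "asymptotically_uniformly_smooth TYPE('a::real_normed_vector)"
    and refl: "reflexive_space TYPE('a)"
  shows "banach_saks TYPE('a)"
  unfolding banach_saks_def
proof (intro allI impI)
  fix x :: "nat \<Rightarrow> 'a" assume "bounded (range x)"
  then obtain M where M: "\<And>n. norm (x n) \<le> M" unfolding bounded_iff by auto
  have M0: "0 \<le> M" using M[of 0] norm_ge_zero[of "x 0"] by linarith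
  obtain U :: "nat filter" where U: "U \<noteq> bot" "U \<le> sequentially"
    "\<forall>P. eventually P U \<or> eventually (\<lambda>x. \<not> P x) U" using ex_ultra_seq by blast
  obtain lU where lU: "\<forall>g::'a \<Rightarrow>\<^sub>L real. ((\<lambda>n. blinfun_apply g (x n)) \<longlongrightarrow> lU g) U"
    using ultra_limits[of U x M, OF U(1,3) M] by blast
  have ladd: "lU (g + h) = lU g + lU h" for g h
  proof -
    have "((\<lambda>n. blinfun_apply g (x n) + blinfun_apply h (x n)) \<longlongrightarrow> lU g + lU h) U"
      by (intro tendsto_add lU[rule_format])
    then have "((\<lambda>n. blinfun_apply (g + h) (x n)) \<longlongrightarrow> lU g + lU h) U"
      by (simp add: plus_blinfun.rep_eq)
    then show ?thesis using tendsto_unique[OF U(1) lU[rule_format, of "g + h"]] by blast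
  qed
  have lscale: "lU (c *\<^sub>R g) = c *\<^sub>R lU g" for c g
  proof -
    have "((\<lambda>n. c * blinfun_apply g (x n)) \<longlongrightarrow> c * lU g) U"
      by (intro tendsto_mult tendsto_const lU[rule_format])
    then have "((\<lambda>n. blinfun_apply (c *\<^sub>R g) (x n)) \<longlongrightarrow> c * lU g) U"
      by (simp add: scaleR_blinfun.rep_eq)
    then show ?thesis using tendsto_unique[OF U(1) lU[rule_format, of "c *\<^sub>R g"]] by simp
  qed
  have lbound: "norm (lU g) \<le> norm g * M" for g
  proof -
    have "((\<lambda>n. \<bar>blinfun_apply g (x n)\<bar>) \<longlongrightarrow> \<bar>lU g\<bar>) U"
      by (intro tendsto_rabs lU[rule_format])
    moreover have "\<bar>blinfun_apply g (x n)\<bar> \<le> norm g * M" for n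
    proof -
      have "\<bar>blinfun_apply g (x n)\<bar> \<le> norm g * norm (x n)" using norm_blinfun[of g "x n"] by simp
      also have "\<dots> \<le> norm g * M" using M[of n] by (simp add: mult_left_mono)
      finally show ?thesis .
    qed
    ultimately have "\<bar>lU g\<bar> \<le> norm g * M"
      using tendsto_upperbound[of _ _ U "norm g * M"] U(1) by (simp add: always_eventually)
    then show ?thesis by simp
  qed
  have bl: "bounded_linear lU"
    by (rule bounded_linear_intro[OF ladd lscale, of M]) (metis lbound mult.commute)
  obtain x0 where x0: "\<And>f. blinfun_apply (Blinfun lU) f = blinfun_apply f x0"
    using refl unfolding reflexive_space_def by blast
  have lx0: "lU g = blinfun_apply g x0" for g using x0[of g] by (simp add: bounded_linear_Blinfun_apply[OF bl])
  define vv where "vv n = x n - x0" for n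
  define avail where "avail N = {n::nat. N < n}" for N :: nat
  have Bd: "norm (vv n) \<le> M + norm x0" for n
    using norm_triangle_ineq4[of "x n" x0] M[of n] by (simp add: vv_def)
  have av: "\<exists>i\<in>avail N. \<exists>e\<in>E. norm (vv i - e) < \<delta>"
    if E: "E \<in> fincodim_subspaces" and d: "\<delta> > 0" for N E \<delta>
  proof -
    obtain L where L: "\<forall>y. y - projL L y \<in> E" using fincodim_proj[OF E] by blast
    define Sf where "Sf = (\<Sum>p\<leftarrow>L. norm (snd p))"
    have Sf0: "Sf \<ge> 0" unfolding Sf_def by (rule sum_list_nonneg) auto
    define \<eta> where "\<eta> = \<delta> / (Sf + 1)"
    have eta: "\<eta> > 0" using d Sf0 by (simp add: \<eta>_def)
    obtain a where a: "N < a" "\<forall>p\<in>set L. \<bar>blinfun_apply (fst p) (x a) - lU (fst p)\<bar> < \<eta>"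
      using eventually_happens'[OF U(1) ultra_near[OF lU U(2) eta, of N L]] by blast
    have small: "\<forall>p\<in>set L. \<bar>blinfun_apply (fst p) (vv a)\<bar> \<le> \<eta>"
      using a(2) by (simp add: vv_def blinfun.diff_right lx0 less_imp_le)
    have "norm (projL L (vv a)) \<le> \<eta> * Sf" unfolding Sf_def by (rule projL_small[OF small])
    also have "\<eta> * Sf < \<delta>" using d Sf0 by (simp add: \<eta>_def field_simps)
    finally have "norm (vv a - (vv a - projL L (vv a))) < \<delta>" by simp
    moreover have "a \<in> avail N" using a by (simp add: avail_def)
    ultimately show ?thesis using L by blast
  qed
  from greedy[where nx=id and avail=avail and vv=vv, OF aus Bd av]
  obtain s where s0: "s 0 \<in> avail 0" and sS: "\<And>k. s (Suc k) \<in> avail (id (s k))"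
    and slim: "(\<lambda>K. (1 / real (Suc K)) *\<^sub>R (\<Sum>k\<le>K. vv (s k))) \<longlonglongrightarrow> 0" by blast
  have "strict_mono s" unfolding strict_mono_Suc_iff using sS by (simp add: avail_def)
  have eq: "(1 / real (Suc K)) *\<^sub>R (\<Sum>k\<le>K. x (s k)) = (1 / real (Suc K)) *\<^sub>R (\<Sum>k\<le>K. vv (s k)) + x0" for K
  proof -
    have "(\<Sum>k\<le>K. vv (s k)) = (\<Sum>k\<le>K. x (s k)) - real (Suc K) *\<^sub>R x0"
      by (simp add: vv_def sum_subtractf sum_constant_scaleR)
    then have "(1 / real (Suc K)) *\<^sub>R (\<Sum>k\<le>K. vv (s k)) = (1 / real (Suc K)) *\<^sub>R (\<Sum>k\<le>K. x (s k)) - x0"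
      by (simp add: scaleR_diff_right)
    then show ?thesis by simp
  qed
  have "(\<lambda>K. (1 / real (Suc K)) *\<^sub>R (\<Sum>k\<le>K. x (s k))) \<longlonglongrightarrow> 0 + x0"
    unfolding eq by (intro tendsto_add slim tendsto_const)
  then have "convergent (\<lambda>K. (1 / real (Suc K)) *\<^sub>R (\<Sum>k\<le>K. x (s k)))"
    by (rule convergentI)
  then show "\<exists>r. strict_mono r \<and> convergent (\<lambda>k. (1 / real (Suc k)) *\<^sub>R (\<Sum>j\<le>k. x (r j)))"
    using \<open>strict_mono s\<close> by blast
qed

theorem corollary3p2:
  assumes "asymptotically_uniformly_smooth TYPE('a::banach)"
  shows "alternating_banach_saks TYPE('a)
         \<and> (reflexive_space TYPE('a) \<longrightarrow> banach_saks TYPE('a))"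
  using ABS_thm[OF assms] BS_thm[OF assms] by blast

end
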